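(* Let $n,t$ be positive integers and let $\mathcal{B}$ be a partition of $[n]$ into $t$ nonempty blocks. Let $\mathcal{B}'\subseteq\mathcal{B}$ be nonempty, let $\ell=\sum_{B\in\mathcal{B}'}|B|$, and let $\langle i_1<i_2<\cdots<i_\ell\rangle$ be the increasing enumeration of $\bigcup_{B\in\mathcal{B}'}B$. Then $K[\underline{i},\mathcal{B}']=K[\underline{i}',\mathcal{B}']$ in each of the following cases: - for every $l\in[\ell-1]$ and all $\underline{i},\underline{i}'$ with $i_l<\underline{i},\underline{i}'\le i_{l+1}$; - for all $\underline{i},\underline{i}'$ with $1\le\underline{i},\underline{i}'\le i_1$; - for all $\underline{i},\underline{i}'$ with $i_\ell<\underline{i},\underline{i}'\le n$.
   Context: Let $A(n)$ be the infinite sequence obtained by concatenating infinitely many copies (segments, numbered $1,2,\ldots$) of $\langle1,2,\ldots,n\rangle$. A position is a pair $(\kappa,v)$ consisting of a segment index $\kappa\ge1$ and a value $v\in[n]$. Positions are ordered lexicographically. A placement of a nonempty $\mathcal{B}'\subseteq\mathcal{B}$ assigns to each $x\in\bigcup_{B\in\mathcal{B}'}B$ a position $(\kappa_x,x)$, with distinct elements at distinct positions. It is valid if, for any two distinct blocks $B,C\in\mathcal{B}'$, no element of $B$ lies strictly between the smallest and the largest positions occupied by elements of $C$. The number of segments used is $\max_x\kappa_x$. $K[\underline{i},\mathcal{B}']$ is the minimum number of segments used by a valid placement of $\mathcal{B}'$ all of whose positions are $\ge(1,\underline{i})$. *)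

theory Defs
  imports Main "HOL-Library.Product_Lexorder" "HOL-Library.Disjoint_Sets"
begin

text \<open>Positions are pairs (segment index, value) of type nat \<times> nat, ordered
lexicographically (Product_Lexorder).  A placement of Bs' is given by a function
kappa assigning each element x of the union of Bs' its segment index; x sits at
position (kappa x, x).\<close>

definition pos :: "(nat \<Rightarrow> nat) \<Rightarrow> nat \<Rightarrow> nat \<times> nat" where
  "pos kappa x = (kappa x, x)"

definition valid_placement :: "nat set set \<Rightarrow> (nat \<Rightarrow> nat) \<Rightarrow> bool" where
  "valid_placement Bs' kappa \<longleftrightarrow>
     (\<forall>x\<in>\<Union>Bs'. 1 \<le> kappa x) \<and>
     (\<forall>B\<in>Bs'. \<forall>C\<in>Bs'. B \<noteq> C \<longrightarrow>
        (\<forall>x\<in>B. \<not> (Min (pos kappa ` C) < pos kappa x \<and> pos kappa x < Max (pos kappa ` C))))"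

definition segments_used :: "nat set set \<Rightarrow> (nat \<Rightarrow> nat) \<Rightarrow> nat" where
  "segments_used Bs' kappa = Max (kappa ` \<Union>Bs')"

definition K :: "nat \<Rightarrow> nat set set \<Rightarrow> nat" where
  "K i Bs' = Inf {m. \<exists>kappa. valid_placement Bs' kappa \<and>
                     (\<forall>x\<in>\<Union>Bs'. (1, i) \<le> pos kappa x) \<and>
                     m = segments_used Bs' kappa}"

end

theory Submission
  imports Defs
begin

lemma K_cong:
  assumes "\<forall>x\<in>\<Union>Bs'. (x < i \<longleftrightarrow> x < i')"
  shows "K i Bs' = K i' Bs'"
proof -
  have "\<And>kappa. valid_placement Bs' kappa \<Longrightarrow>
     (\<forall>x\<in>\<Union>Bs'. (1, i) \<le> pos kappa x) = (\<forall>x\<in>\<Union>Bs'. (1, i') \<le> pos kappa x)"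
  proof -
    fix kappa assume v: "valid_placement Bs' kappa"
    have "\<And>x. x \<in> \<Union>Bs' \<Longrightarrow> ((1::nat, i) \<le> pos kappa x) = ((1, i') \<le> pos kappa x)"
    proof -
      fix x assume x: "x \<in> \<Union>Bs'"
      have "1 \<le> kappa x" using v x unfolding valid_placement_def by blast
      moreover have "(x < i \<longleftrightarrow> x < i')" using assms x by blast
      ultimately show "((1::nat, i) \<le> pos kappa x) = ((1, i') \<le> pos kappa x)"
        unfolding pos_def less_eq_prod_def by auto
    qed
    then show "(\<forall>x\<in>\<Union>Bs'. (1, i) \<le> pos kappa x) = (\<forall>x\<in>\<Union>Bs'. (1, i') \<le> pos kappa x)"
      by blast
  qed
  then have "{m. \<exists>kappa. valid_placement Bs' kappa \<and> (\<forall>x\<in>\<Union>Bs'. (1, i) \<le> pos kappa x) \<and> m = segments_used Bs' kappa}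
    = {m. \<exists>kappa. valid_placement Bs' kappa \<and> (\<forall>x\<in>\<Union>Bs'. (1, i') \<le> pos kappa x) \<and> m = segments_used Bs' kappa}"
    by blast
  then show ?thesis unfolding K_def by simp
qed

theorem lemma2:
  fixes n t :: nat and Bs Bs' :: "nat set set" and ell :: nat and ii :: "nat \<Rightarrow> nat"
  assumes "0 < n" and "0 < t"
    and "partition_on {1..n} Bs" and "card Bs = t"
    and "Bs' \<subseteq> Bs" and "Bs' \<noteq> {}"
  defines "ell \<equiv> (\<Sum>B\<in>Bs'. card B)"
    and "ii \<equiv> (\<lambda>l. sorted_list_of_set (\<Union>Bs') ! (l - 1))"
  shows "(\<forall>l\<in>{1..ell - 1}. \<forall>i i'. ii l < i \<and> i \<le> ii (l + 1) \<and> ii l < i' \<and> i' \<le> ii (l + 1)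
            \<longrightarrow> K i Bs' = K i' Bs')
       \<and> (\<forall>i i'. 1 \<le> i \<and> i \<le> ii 1 \<and> 1 \<le> i' \<and> i' \<le> ii 1 \<longrightarrow> K i Bs' = K i' Bs')
       \<and> (\<forall>i i'. ii ell < i \<and> i \<le> n \<and> ii ell < i' \<and> i' \<le> n \<longrightarrow> K i Bs' = K i' Bs')"
proof -
  define U where "U = \<Union>Bs'"
  define xs where "xs = sorted_list_of_set U"
  have P: "partition_on {1..n} Bs" by fact
  have UB: "\<Union>Bs = {1..n}" and dB: "disjoint Bs" using P unfolding partition_on_def by auto
  have Usub: "U \<subseteq> {1..n}" unfolding U_def using UB assms(5) by blast
  have finU: "finite U" using Usub finite_subset by blast
  have "Bs' \<subseteq> Pow {1..n}" using UB assms(5) by blast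
  then have finBs': "finite Bs'" using finite_subset by blast
  have disj: "disjoint Bs'" using dB assms(5) pairwise_subset by blast
  obtain B0 where B0: "B0 \<in> Bs'" using assms(6) by blast
  have eB: "{} \<notin> Bs" using P unfolding partition_on_def by simp
  have "B0 \<noteq> {}" using B0 assms(5) eB by auto
  then have ne: "U \<noteq> {}" using B0 unfolding U_def by blast
  have finB: "finite A" if "A \<in> Bs'" for A
  proof (rule finite_subset[OF _ finU])
    show "A \<subseteq> U" using that unfolding U_def by auto
  qed
  have cardU: "card U = ell" unfolding U_def ell_def
    using card_Union_disjoint[OF disj finB] by simp
  have len: "length xs = ell" using cardU xs_def finU by simp
  have sxs: "sorted xs" and dxs: "distinct xs" and setxs: "set xs = U" using xs_def finU by auto
  have iixs: "\<And>l. ii l = xs ! (l - 1)" unfolding ii_def xs_def U_def by simp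
  have ellpos: "ell > 0" using len ne setxs by auto
  have memU: "\<And>x. x \<in> U \<Longrightarrow> \<exists>k<ell. x = xs ! k" using setxs len
    by (auto simp: in_set_conv_nth)
  have c1: "\<forall>l\<in>{1..ell - 1}. \<forall>i i'. ii l < i \<and> i \<le> ii (l + 1) \<and> ii l < i' \<and> i' \<le> ii (l + 1)
            \<longrightarrow> K i Bs' = K i' Bs'"
  proof (intro ballI allI impI)
    fix l i i' assume l: "l \<in> {1..ell - 1}" and h: "ii l < i \<and> i \<le> ii (l + 1) \<and> ii l < i' \<and> i' \<le> ii (l + 1)"
    have "ii l = xs ! (l-1)" "ii (l+1) = xs ! l" using iixs by auto
    then have h1: "xs ! (l-1) < i" "i \<le> xs ! l" "xs ! (l-1) < i'" "i' \<le> xs ! l" using h by auto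
    have "\<forall>x\<in>U. (x < i \<longleftrightarrow> x < i')"
    proof
      fix x assume "x \<in> U"
      then obtain k where k: "k < ell" "x = xs ! k" using memU by blast
      show "(x < i \<longleftrightarrow> x < i')"
      proof (cases "k \<le> l - 1")
        case True
        have "xs ! k \<le> xs ! (l-1)" using sorted_nth_mono[OF sxs True] l len by auto
        then show ?thesis using h1 k by auto
      next
        case False
        then have "l \<le> k" by auto
        have "xs ! l \<le> xs ! k" using sorted_nth_mono[OF sxs \<open>l \<le> k\<close>] k len by auto
        then show ?thesis using h1 k by auto
      qed
    qed
    then show "K i Bs' = K i' Bs'" using K_cong U_def by blast
  qed
  have c2: "\<forall>i i'. 1 \<le> i \<and> i \<le> ii 1 \<and> 1 \<le> i' \<and> i' \<le> ii 1 \<longrightarrow> K i Bs' = K i' Bs'"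
  proof (intro allI impI)
    fix i i' assume h: "1 \<le> i \<and> i \<le> ii 1 \<and> 1 \<le> i' \<and> i' \<le> ii 1"
    have "\<forall>x\<in>U. (x < i \<longleftrightarrow> x < i')"
    proof
      fix x assume "x \<in> U"
      then obtain k where k: "k < ell" "x = xs ! k" using memU by blast
      have "xs ! 0 \<le> xs ! k" using sorted_nth_mono[OF sxs, of 0 k] k len by auto
      then show "(x < i \<longleftrightarrow> x < i')" using h iixs[of 1] k by auto
    qed
    then show "K i Bs' = K i' Bs'" using K_cong U_def by blast
  qed
  have c3: "\<forall>i i'. ii ell < i \<and> i \<le> n \<and> ii ell < i' \<and> i' \<le> n \<longrightarrow> K i Bs' = K i' Bs'"
  proof (intro allI impI)
    fix i i' assume h: "ii ell < i \<and> i \<le> n \<and> ii ell < i' \<and> i' \<le> n"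
    have "\<forall>x\<in>U. (x < i \<longleftrightarrow> x < i')"
    proof
      fix x assume "x \<in> U"
      then obtain k where k: "k < ell" "x = xs ! k" using memU by blast
      have "xs ! k \<le> xs ! (ell - 1)" using sorted_nth_mono[OF sxs, of k "ell - 1"] k len by auto
      then show "(x < i \<longleftrightarrow> x < i')" using h iixs[of ell] k by auto
    qed
    then show "K i Bs' = K i' Bs'" using K_cong U_def by blast
  qed
  show ?thesis using c1 c2 c3 by blast
qed

end
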